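(* Let $\mathcal T$ be a theory of $\mathsf{LGIM}$ consisting of generalised graded implications and let $\zeta_1,\dots,\zeta_n\Rightarrow_e\eta$ be a generalised graded implication. If $\mathcal T\models\zeta_1,\dots,\zeta_n\Rightarrow_e\eta$, then $\mathcal T\vdash_{\mathsf{LGIM}}\zeta_1,\dots,\zeta_n\Rightarrow_t\eta$ for every $t\in[0,1]$ with $t<e$.
   Context: Fix a continuous t-norm $\odot$ on $[0,1]$ and let $c\oplus d = 1-((1-c)\odot(1-d))$. Write $c\odot_{\L} d=\max(c+d-1,0)$, $c\oplus_{\L} d=\min(c+d,1)$, and $\mathrm{avg}(r_1,\dots,r_n)=(r_1+\dots+r_n)/n$. Basic expressions: built from countably many variables $\phi_0,\phi_1,\dots$ and constants $\bot,\top$ by binary $\land,\lor,\odot$ and unary $\sim$. A generalised graded implication is written $\alpha_1,\dots,\alpha_n\Rightarrow_c\beta$ where $n\ge1$, $\alpha_1,\dots,\alpha_n$ is a multiset of basic expressions, $\beta$ a basic expression, $c\in[0,1]$; for $n=1$ it is a graded implication $\alpha\Rightarrow_c\beta$. Formulas of $\mathsf{LGIM}$ are built from generalised graded implications by classical $\land,\lor,\lnot$; $\Phi\to\Psi$ abbreviates $\lnot\Phi\lor\Psi$. A theory is a set of formulas. Semantics: an evaluation is a map $v$ from basic expressions to $[0,1]$ with $v(\bot)=0$, $v(\top)=1$, interpreting $\land$ by min, $\lor$ by max, $\odot$ by the t-norm, $\sim$ by $x\mapsto1-x$. $v$ satisfies $\alpha_1,\dots,\alpha_n\Rightarrow_c\beta$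 iff $\mathrm{avg}(v(\alpha_1),\dots,v(\alpha_n))\le v(\beta)+1-c$; satisfaction extends classically; $\mathcal T\models\Phi$ means every evaluation satisfying all of $\mathcal T$ satisfies $\Phi$. Calculus $\mathsf{LGIM}$: axioms are (i) all substitution instances (by generalised graded implications) of classical propositional tautologies; (ii) for all basic expressions $\alpha,\beta,\gamma$ and $c,d\in[0,1]$: ($\land_1$) $(\alpha\Rightarrow_d\beta)\land(\alpha\Rightarrow_d\gamma)\to(\alpha\Rightarrow_d\beta\land\gamma)$; ($\land_2$) $\alpha\land\beta\Rightarrow_1\alpha$; ($\land_3$) $\alpha\land\beta\Rightarrow_1\beta$; ($\lor_1$) $(\alpha\Rightarrow_d\gamma)\land(\beta\Rightarrow_d\gamma)\to(\alpha\lor\beta\Rightarrow_d\gamma)$; ($\lor_2$) $\alpha\Rightarrow_1\alpha\lor\beta$; ($\lor_3$) $\beta\Rightarrow_1\alpha\lor\beta$; ($\odot_1$) $(\top\Rightarrow_c\alpha)\land(\top\Rightarrow_d\beta)\to(\top\Rightarrow_{c\odot d}\alpha\odot\beta)$; ($\odot_2$) $(\alpha\Rightarrow_c\bot)\land(\beta\Rightarrow_d\bot)\to(\alpha\odot\beta\Rightarrow_{c\oplus d}\bot)$; ($\odot_3$) $\top\Rightarrow_1\top\odot\top$; ($\sim_1$) $(\alpha\Rightarrow_d\beta)\to(\sim\beta\Rightarrow_d\sim\alpha)$; ($\sim_2$) $\sim\sim\alpha\Rightarrow_1\alpha$; ($\sim_3$) $\alpha\Rightarrow_1\sim\sim\alpha$;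 ($\top$) $\alpha\Rightarrow_1\top$; ($\bot$) $\bot\Rightarrow_1\alpha$; (0) $\alpha\Rightarrow_0\beta$; ($c$) $\alpha\Rightarrow_c\alpha$; (inkons) $\lnot(\top\Rightarrow_c\bot)$ for $c>0$; (trans$_1$) $(\alpha\Rightarrow_c\beta)\land(\beta\Rightarrow_d\gamma)\to(\alpha\Rightarrow_{c\odot_{\L}d}\gamma)$; (trans$_2$) $(\alpha\Rightarrow_c\bot)\land(\top\Rightarrow_d\beta)\to(\alpha\Rightarrow_{c\oplus_{\L}d}\beta)$; (lin$_1$) $(\alpha\Rightarrow_1\beta)\lor(\beta\Rightarrow_1\alpha)$; (lin$_2$) $(\top\Rightarrow_d\alpha)\lor(\alpha\Rightarrow_{1-d}\bot)$; (iii) for all basic expressions $\alpha,\alpha_i,\beta_i,\beta,\gamma$ and $c,c_i,d\in[0,1]$: (trans$\varnothing_1$) $(\alpha_1\Rightarrow_{c_1}\beta_1)\land\dots\land(\alpha_n\Rightarrow_{c_n}\beta_n)\land(\beta_1,\dots,\beta_n\Rightarrow_d\gamma)\to(\alpha_1,\dots,\alpha_n\Rightarrow_{\mathrm{avg}(c_1,\dots,c_n)\odot_{\L}d}\gamma)$; (trans$\varnothing_2$) $(\alpha_1,\dots,\alpha_n\Rightarrow_c\beta)\land(\beta\Rightarrow_d\gamma)\to(\alpha_1,\dots,\alpha_n\Rightarrow_{c\odot_{\L}d}\gamma)$; (trans$\varnothing_3$) $(\alpha_1\Rightarrow_{c_1}\bot)\land\dots\land(\alpha_n\Rightarrow_{c_n}\bot)\land(\top\Rightarrow_d\beta)\to(\alpha_1,\dots,\alpha_n\Rightarrow_{\mathrm{avg}(c_1,\dots,c_n)\oplus_{\L}d}\beta)$;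 ($\top\varnothing$) $(\top,\dots,\top\Rightarrow_c\alpha)\to(\top\Rightarrow_c\alpha)$. The only rule is modus ponens. $\mathcal T\vdash_{\mathsf{LGIM}}\Phi$ means $\Phi$ has a finite derivation from axioms and elements of $\mathcal T$ by modus ponens. *)

theory Defs
  imports "HOL-Analysis.Analysis" "HOL-Library.Multiset"
begin

definition cont_tnorm :: "(real \<Rightarrow> real \<Rightarrow> real) \<Rightarrow> bool" where
  "cont_tnorm tn \<longleftrightarrow>
     (\<forall>x\<in>{0..1}. \<forall>y\<in>{0..1}. tn x y \<in> {0..1}) \<and>
     (\<forall>x\<in>{0..1}. \<forall>y\<in>{0..1}. tn x y = tn y x) \<and>
     (\<forall>x\<in>{0..1}. \<forall>y\<in>{0..1}. \<forall>z\<in>{0..1}. tn (tn x y) z = tn x (tn y z)) \<and>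
     (\<forall>x\<in>{0..1}. \<forall>y\<in>{0..1}. \<forall>z\<in>{0..1}. y \<le> z \<longrightarrow> tn x y \<le> tn x z) \<and>
     (\<forall>x\<in>{0..1}. tn x 1 = x) \<and>
     continuous_on ({0..1} \<times> {0..1}) (\<lambda>(x, y). tn x y)"

definition tconorm :: "(real \<Rightarrow> real \<Rightarrow> real) \<Rightarrow> real \<Rightarrow> real \<Rightarrow> real" where
  "tconorm tn c d = 1 - tn (1 - c) (1 - d)"

definition luk_t :: "real \<Rightarrow> real \<Rightarrow> real" where
  "luk_t c d = max (c + d - 1) 0"

definition luk_s :: "real \<Rightarrow> real \<Rightarrow> real" where
  "luk_s c d = min (c + d) 1"

definition avg_list :: "real list \<Rightarrow> real" where
  "avg_list xs = sum_list xs / real (length xs)"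

definition avg_mset :: "real multiset \<Rightarrow> real" where
  "avg_mset X = sum_mset X / real (size X)"

datatype bexp = Var nat | Bot | Top | And bexp bexp | Or bexp bexp | Odot bexp bexp | Neg bexp

text \<open>Formulas of LGIM; GImp M c b is the generalised graded implication
  with antecedent multiset M, grade c and consequent b.\<close>
datatype fm = GImp "bexp multiset" real bexp | FAnd fm fm | FOr fm fm | FNot fm

definition G1 :: "bexp \<Rightarrow> real \<Rightarrow> bexp \<Rightarrow> fm" where
  "G1 a c b = GImp {#a#} c b"

definition Imp :: "fm \<Rightarrow> fm \<Rightarrow> fm" where
  "Imp A B = FOr (FNot A) B"

fun Conjs :: "fm list \<Rightarrow> fm \<Rightarrow> fm" where
  "Conjs [] B = B"
| "Conjs (A # As) B = FAnd A (Conjs As B)"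

fun wf_fm :: "fm \<Rightarrow> bool" where
  "wf_fm (GImp M c b) \<longleftrightarrow> M \<noteq> {#} \<and> 0 \<le> c \<and> c \<le> 1"
| "wf_fm (FAnd A B) \<longleftrightarrow> wf_fm A \<and> wf_fm B"
| "wf_fm (FOr A B) \<longleftrightarrow> wf_fm A \<and> wf_fm B"
| "wf_fm (FNot A) \<longleftrightarrow> wf_fm A"

fun peval :: "(bexp multiset \<Rightarrow> real \<Rightarrow> bexp \<Rightarrow> bool) \<Rightarrow> fm \<Rightarrow> bool" where
  "peval I (GImp M c b) = I M c b"
| "peval I (FAnd A B) = (peval I A \<and> peval I B)"
| "peval I (FOr A B) = (peval I A \<or> peval I B)"
| "peval I (FNot A) = (\<not> peval I A)"

text \<open>Substitution instances of classical tautologies = formulas true under every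
  boolean assignment to their generalised graded implications.\<close>
definition taut :: "fm \<Rightarrow> bool" where
  "taut A \<longleftrightarrow> (\<forall>I. peval I A)"

fun beval :: "(real \<Rightarrow> real \<Rightarrow> real) \<Rightarrow> (nat \<Rightarrow> real) \<Rightarrow> bexp \<Rightarrow> real" where
  "beval tn v (Var i) = v i"
| "beval tn v Bot = 0"
| "beval tn v Top = 1"
| "beval tn v (And a b) = min (beval tn v a) (beval tn v b)"
| "beval tn v (Or a b) = max (beval tn v a) (beval tn v b)"
| "beval tn v (Odot a b) = tn (beval tn v a) (beval tn v b)"
| "beval tn v (Neg a) = 1 - beval tn v a"

fun sat :: "(real \<Rightarrow> real \<Rightarrow> real) \<Rightarrow> (nat \<Rightarrow> real) \<Rightarrow> fm \<Rightarrow> bool" where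
  "sat tn v (GImp M c b) \<longleftrightarrow>
     avg_mset (image_mset (beval tn v) M) \<le> beval tn v b + 1 - c"
| "sat tn v (FAnd A B) = (sat tn v A \<and> sat tn v B)"
| "sat tn v (FOr A B) = (sat tn v A \<or> sat tn v B)"
| "sat tn v (FNot A) = (\<not> sat tn v A)"

definition valuation :: "(nat \<Rightarrow> real) \<Rightarrow> bool" where
  "valuation v \<longleftrightarrow> (\<forall>i. 0 \<le> v i \<and> v i \<le> 1)"

definition entails :: "(real \<Rightarrow> real \<Rightarrow> real) \<Rightarrow> fm set \<Rightarrow> fm \<Rightarrow> bool" where
  "entails tn T A \<longleftrightarrow> (\<forall>v. valuation v \<longrightarrow> (\<forall>B\<in>T. sat tn v B) \<longrightarrow> sat tn v A)"

inductive lgim_ax :: "(real \<Rightarrow> real \<Rightarrow> real) \<Rightarrow> fm \<Rightarrow> bool" for tn where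
  taut: "wf_fm A \<Longrightarrow> taut A \<Longrightarrow> lgim_ax tn A"
| and1: "0 \<le> d \<Longrightarrow> d \<le> 1 \<Longrightarrow>
    lgim_ax tn (Imp (FAnd (G1 a d b) (G1 a d g)) (G1 a d (And b g)))"
| and2: "lgim_ax tn (G1 (And a b) 1 a)"
| and3: "lgim_ax tn (G1 (And a b) 1 b)"
| or1: "0 \<le> d \<Longrightarrow> d \<le> 1 \<Longrightarrow>
    lgim_ax tn (Imp (FAnd (G1 a d g) (G1 b d g)) (G1 (Or a b) d g))"
| or2: "lgim_ax tn (G1 a 1 (Or a b))"
| or3: "lgim_ax tn (G1 b 1 (Or a b))"
| odot1: "0 \<le> c \<Longrightarrow> c \<le> 1 \<Longrightarrow> 0 \<le> d \<Longrightarrow> d \<le> 1 \<Longrightarrow>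
    lgim_ax tn (Imp (FAnd (G1 Top c a) (G1 Top d b)) (G1 Top (tn c d) (Odot a b)))"
| odot2: "0 \<le> c \<Longrightarrow> c \<le> 1 \<Longrightarrow> 0 \<le> d \<Longrightarrow> d \<le> 1 \<Longrightarrow>
    lgim_ax tn (Imp (FAnd (G1 a c Bot) (G1 b d Bot)) (G1 (Odot a b) (tconorm tn c d) Bot))"
| odot3: "lgim_ax tn (G1 Top 1 (Odot Top Top))"
| neg1: "0 \<le> d \<Longrightarrow> d \<le> 1 \<Longrightarrow> lgim_ax tn (Imp (G1 a d b) (G1 (Neg b) d (Neg a)))"
| neg2: "lgim_ax tn (G1 (Neg (Neg a)) 1 a)"
| neg3: "lgim_ax tn (G1 a 1 (Neg (Neg a)))"
| top: "lgim_ax tn (G1 a 1 Top)"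
| bot: "lgim_ax tn (G1 Bot 1 a)"
| zero: "lgim_ax tn (G1 a 0 b)"
| refl: "0 \<le> c \<Longrightarrow> c \<le> 1 \<Longrightarrow> lgim_ax tn (G1 a c a)"
| inkons: "0 < c \<Longrightarrow> c \<le> 1 \<Longrightarrow> lgim_ax tn (FNot (G1 Top c Bot))"
| trans1: "0 \<le> c \<Longrightarrow> c \<le> 1 \<Longrightarrow> 0 \<le> d \<Longrightarrow> d \<le> 1 \<Longrightarrow>
    lgim_ax tn (Imp (FAnd (G1 a c b) (G1 b d g)) (G1 a (luk_t c d) g))"
| trans2: "0 \<le> c \<Longrightarrow> c \<le> 1 \<Longrightarrow> 0 \<le> d \<Longrightarrow> d \<le> 1 \<Longrightarrow>
    lgim_ax tn (Imp (FAnd (G1 a c Bot) (G1 Top d b)) (G1 a (luk_s c d) b))"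
| lin1: "lgim_ax tn (FOr (G1 a 1 b) (G1 b 1 a))"
| lin2: "0 \<le> d \<Longrightarrow> d \<le> 1 \<Longrightarrow> lgim_ax tn (FOr (G1 Top d a) (G1 a (1 - d) Bot))"
| transM1: "length as = n \<Longrightarrow> length bs = n \<Longrightarrow> length cs = n \<Longrightarrow> 1 \<le> n \<Longrightarrow>
    (\<forall>c\<in>set cs. 0 \<le> c \<and> c \<le> 1) \<Longrightarrow> 0 \<le> d \<Longrightarrow> d \<le> 1 \<Longrightarrow>
    lgim_ax tn (Imp (Conjs (map (\<lambda>(a, c, b). G1 a c b) (zip as (zip cs bs)))
                          (GImp (mset bs) d g))
                    (GImp (mset as) (luk_t (avg_list cs) d) g))"
| transM2: "M \<noteq> {#} \<Longrightarrow> 0 \<le> c \<Longrightarrow> c \<le> 1 \<Longrightarrow> 0 \<le> d \<Longrightarrow> d \<le> 1 \<Longrightarrow>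
    lgim_ax tn (Imp (FAnd (GImp M c b) (G1 b d g)) (GImp M (luk_t c d) g))"
| transM3: "length as = n \<Longrightarrow> length cs = n \<Longrightarrow> 1 \<le> n \<Longrightarrow>
    (\<forall>c\<in>set cs. 0 \<le> c \<and> c \<le> 1) \<Longrightarrow> 0 \<le> d \<Longrightarrow> d \<le> 1 \<Longrightarrow>
    lgim_ax tn (Imp (Conjs (map (\<lambda>(a, c). G1 a c Bot) (zip as cs)) (G1 Top d b))
                    (GImp (mset as) (luk_s (avg_list cs) d) b))"
| topM: "1 \<le> n \<Longrightarrow> 0 \<le> c \<Longrightarrow> c \<le> 1 \<Longrightarrow>
    lgim_ax tn (Imp (GImp (replicate_mset n Top) c a) (G1 Top c a))"

inductive derivable :: "(real \<Rightarrow> real \<Rightarrow> real) \<Rightarrow> fm set \<Rightarrow> fm \<Rightarrow> bool" for tn T where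
  ax: "lgim_ax tn A \<Longrightarrow> derivable tn T A"
| hyp: "A \<in> T \<Longrightarrow> derivable tn T A"
| mp: "derivable tn T A \<Longrightarrow> derivable tn T (Imp A B) \<Longrightarrow> derivable tn T B"

end

theory Submission
  imports Defs
begin


lemma wf_Conjs[simp]: "wf_fm (Conjs xs B) \<longleftrightarrow> (\<forall>x\<in>set xs. wf_fm x) \<and> wf_fm B"
  by (induction xs) auto

lemma avg_list_bounds:
  assumes "\<forall>c\<in>set cs. 0 \<le> c \<and> c \<le> 1" "cs \<noteq> []"
  shows "0 \<le> avg_list cs" "avg_list cs \<le> 1"
proof -
  have "sum_list cs \<le> sum_list (map (\<lambda>_. 1::real) cs)"
    using sum_list_mono[of cs "\<lambda>x. x" "\<lambda>_. 1"] assms by auto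
  hence a: "sum_list cs \<le> real (length cs)" by (simp add: sum_list_triv)
  have b: "0 \<le> sum_list cs" using assms by (intro sum_list_nonneg) auto
  show "0 \<le> avg_list cs" using b by (simp add: avg_list_def)
  show "avg_list cs \<le> 1" using a assms by (simp add: avg_list_def)
qed

lemma tn_range: "cont_tnorm tn \<Longrightarrow> 0 \<le> x \<Longrightarrow> x \<le> 1 \<Longrightarrow> 0 \<le> y \<Longrightarrow> y \<le> 1 \<Longrightarrow>
   0 \<le> tn x y \<and> tn x y \<le> 1"
  unfolding cont_tnorm_def by auto

lemma ax_wf: assumes "lgim_ax tn A" "cont_tnorm tn" shows "wf_fm A"
  using assms(1)
proof cases
  case (transM1 as n bs cs d g)
  hence "cs \<noteq> []" by auto
  then show ?thesis using transM1 avg_list_bounds[of cs]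
    by (auto simp: Imp_def G1_def luk_t_def set_zip)
next
  case (transM3 as n cs d b)
  hence "cs \<noteq> []" by auto
  then show ?thesis using transM3 avg_list_bounds[of cs]
    by (auto simp: Imp_def G1_def luk_s_def set_zip)
next
  case (odot1 c d a b)
  then show ?thesis using tn_range[OF assms(2), of c d] by (auto simp: Imp_def G1_def)
next
  case (odot2 c d a b)
  then show ?thesis using tn_range[OF assms(2), of "1-c" "1-d"] by (auto simp: Imp_def G1_def tconorm_def)
qed (auto simp: Imp_def G1_def luk_t_def luk_s_def)

lemma der_wf: "derivable tn S A \<Longrightarrow> cont_tnorm tn \<Longrightarrow> \<forall>X\<in>S. wf_fm X \<Longrightarrow> wf_fm A"
  by (induction rule: derivable.induct) (auto intro: ax_wf simp: Imp_def)

lemma der_mono: "derivable tn S A \<Longrightarrow> S \<subseteq> S' \<Longrightarrow> derivable tn S' A"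
  by (induction rule: derivable.induct) (auto intro: derivable.intros)

lemma der_compact: "derivable tn S A \<Longrightarrow> \<exists>S0. finite S0 \<and> S0 \<subseteq> S \<and> derivable tn S0 A"
proof (induction rule: derivable.induct)
  case (ax A) then show ?case by (auto intro: derivable.ax)
next
  case (hyp A) then show ?case by (intro exI[of _ "{A}"]) (auto intro: derivable.hyp)
next
  case (mp A B)
  then obtain S1 S2 where "finite S1" "S1 \<subseteq> S" "derivable tn S1 A" "finite S2" "S2 \<subseteq> S" "derivable tn S2 (Imp A B)"
    by blast
  then show ?case
    by (intro exI[of _ "S1 \<union> S2"]) (auto intro: derivable.mp der_mono)
qed

lemma der_cut: "derivable tn (insert C S) B \<Longrightarrow> derivable tn S C \<Longrightarrow> derivable tn S B"
  by (induction rule: derivable.induct) (auto intro: derivable.intros)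

lemma der_taut: "wf_fm A \<Longrightarrow> taut A \<Longrightarrow> derivable tn S A"
  by (auto intro: derivable.ax lgim_ax.taut)

lemma der_mp: "derivable tn S A \<Longrightarrow> derivable tn S (Imp A B) \<Longrightarrow> derivable tn S B"
  by (rule derivable.mp)

lemma deduction:
  assumes "derivable tn (insert C S) B" "cont_tnorm tn" "\<forall>X\<in>S. wf_fm X" "wf_fm C"
  shows "derivable tn S (Imp C B)"
  using assms(1)
proof (induction rule: derivable.induct)
  case (ax A)
  have "wf_fm A" using ax ax_wf assms by blast
  hence "derivable tn S (Imp A (Imp C A))"
    using assms by (intro der_taut) (auto simp: Imp_def taut_def)
  then show ?case using ax by (blast intro: derivable.intros)
next
  case (hyp A)
  show ?case
  proof (cases "A = C")
    case True then show ?thesis using assms by (intro der_taut) (auto simp: Imp_def taut_def)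
  next
    case False
    hence "A \<in> S" using hyp by auto
    hence "wf_fm A" using assms by auto
    hence "derivable tn S (Imp A (Imp C A))"
      using assms by (intro der_taut) (auto simp: Imp_def taut_def)
    then show ?thesis using \<open>A \<in> S\<close> by (blast intro: derivable.intros)
  qed
next
  case (mp A B)
  have wA: "wf_fm A" and wB: "wf_fm B"
    using der_wf[OF mp(2) assms(2)] der_wf[OF mp(1) assms(2)] assms by (auto simp: Imp_def)
  have "derivable tn S (Imp (Imp C A) (Imp (Imp C (Imp A B)) (Imp C B)))"
    using assms wA wB by (intro der_taut) (auto simp: Imp_def taut_def)
  then show ?case using mp by (blast intro: derivable.intros)
qed



locale mc =
  fixes tn :: "real \<Rightarrow> real \<Rightarrow> real" and \<Gamma> :: "fm set" and goal :: fm
  assumes tnorm: "cont_tnorm tn"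
    and wfG: "\<forall>X\<in>\<Gamma>. wf_fm X"
    and wfgoal: "wf_fm goal"
    and nd: "\<not> derivable tn \<Gamma> goal"
    and maxi: "\<And>S. \<Gamma> \<subseteq> S \<Longrightarrow> \<forall>X\<in>S. wf_fm X \<Longrightarrow> \<not> derivable tn S goal \<Longrightarrow> S = \<Gamma>"
begin

lemma closed: assumes "derivable tn \<Gamma> A" shows "A \<in> \<Gamma>"
proof -
  have wA: "wf_fm A" using der_wf[OF assms tnorm wfG] .
  have "\<not> derivable tn (insert A \<Gamma>) goal"
    using der_cut[of tn A \<Gamma> goal] assms nd by blast
  hence "insert A \<Gamma> = \<Gamma>" using maxi[of "insert A \<Gamma>"] wA wfG by auto
  thus ?thesis by auto
qed

lemma ax_in: "lgim_ax tn A \<Longrightarrow> A \<in> \<Gamma>"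
  by (rule closed) (rule derivable.ax)

lemma mpG: "A \<in> \<Gamma> \<Longrightarrow> Imp A B \<in> \<Gamma> \<Longrightarrow> B \<in> \<Gamma>"
  by (rule closed) (meson derivable.hyp derivable.mp)

lemma notin_imp: assumes "wf_fm A" "A \<notin> \<Gamma>" shows "derivable tn \<Gamma> (Imp A goal)"
proof -
  have "insert A \<Gamma> \<noteq> \<Gamma>" using assms by auto
  hence "derivable tn (insert A \<Gamma>) goal" using maxi[of "insert A \<Gamma>"] assms wfG by auto
  thus ?thesis using deduction tnorm wfG assms by blast
qed

lemma taut_in: "wf_fm A \<Longrightarrow> taut A \<Longrightarrow> A \<in> \<Gamma>"
  by (intro closed der_taut)

lemma prime: assumes "FOr A B \<in> \<Gamma>" shows "A \<in> \<Gamma> \<or> B \<in> \<Gamma>"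
proof (rule ccontr)
  assume nn: "\<not> (A \<in> \<Gamma> \<or> B \<in> \<Gamma>)"
  have w: "wf_fm A" "wf_fm B" using wfG assms by auto
  have 1: "derivable tn \<Gamma> (Imp A goal)" "derivable tn \<Gamma> (Imp B goal)"
    using notin_imp w nn by auto
  have "derivable tn \<Gamma> (Imp (FOr A B) (Imp (Imp A goal) (Imp (Imp B goal) goal)))"
    using w wfgoal by (intro der_taut) (auto simp: Imp_def taut_def)
  hence "derivable tn \<Gamma> goal" using 1 assms derivable.hyp der_mp by metis
  thus False using nd by auto
qed

lemma notboth: assumes "FNot A \<in> \<Gamma>" shows "A \<notin> \<Gamma>"
proof
  assume "A \<in> \<Gamma>"
  have w: "wf_fm A" using wfG assms by auto
  have "derivable tn \<Gamma> (Imp A (Imp (FNot A) goal))"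
    using w wfgoal by (intro der_taut) (auto simp: Imp_def taut_def)
  hence "derivable tn \<Gamma> goal" using \<open>A \<in> \<Gamma>\<close> assms derivable.hyp der_mp by metis
  thus False using nd by auto
qed

lemma goal_notin: "goal \<notin> \<Gamma>" using nd by (blast intro: derivable.hyp)

lemma andI: assumes "A \<in> \<Gamma>" "B \<in> \<Gamma>" shows "FAnd A B \<in> \<Gamma>"
proof -
  have w: "wf_fm A" "wf_fm B" using wfG assms by auto
  have "Imp A (Imp B (FAnd A B)) \<in> \<Gamma>"
    using w by (intro taut_in) (auto simp: Imp_def taut_def)
  thus ?thesis using assms mpG by blast
qed

lemma Conjs_in: "\<forall>x\<in>set xs. x \<in> \<Gamma> \<Longrightarrow> B \<in> \<Gamma> \<Longrightarrow> Conjs xs B \<in> \<Gamma>"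
  by (induction xs) (auto intro: andI)

lemma ax2: "lgim_ax tn (Imp (FAnd X Y) Z) \<Longrightarrow> X \<in> \<Gamma> \<Longrightarrow> Y \<in> \<Gamma> \<Longrightarrow> Z \<in> \<Gamma>"
  using ax_in andI mpG by blast

lemma ax1: "lgim_ax tn (Imp X Z) \<Longrightarrow> X \<in> \<Gamma> \<Longrightarrow> Z \<in> \<Gamma>"
  using ax_in mpG by blast

lemma lower:
  assumes "GImp N c b \<in> \<Gamma>" "0 \<le> c'" "c' \<le> c"
  shows "GImp N c' b \<in> \<Gamma>"
proof -
  have w: "N \<noteq> {#}" "0 \<le> c" "c \<le> 1" using wfG assms by auto
  have r: "G1 b (1 - c + c') b \<in> \<Gamma>" using assms w by (intro ax_in lgim_ax.refl) auto
  have "GImp N (luk_t c (1 - c + c')) b \<in> \<Gamma>"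
    using ax2[OF lgim_ax.transM2[where M=N and c=c and d="1-c+c'" and b=b and g=b]] assms w r by auto
  moreover have "luk_t c (1 - c + c') = c'" using assms by (simp add: luk_t_def)
  ultimately show ?thesis by simp
qed

lemma lower1: "G1 a c b \<in> \<Gamma> \<Longrightarrow> 0 \<le> c' \<Longrightarrow> c' \<le> c \<Longrightarrow> G1 a c' b \<in> \<Gamma>"
  unfolding G1_def by (rule lower)

lemma wfG1: "G1 a c b \<in> \<Gamma> \<Longrightarrow> 0 \<le> c \<and> c \<le> 1"
  using wfG by (auto simp: G1_def)

lemma trans1: assumes "G1 a c b \<in> \<Gamma>" "G1 b d g \<in> \<Gamma>" shows "G1 a (luk_t c d) g \<in> \<Gamma>"
proof -
  have "0 \<le> c \<and> c \<le> 1" "0 \<le> d \<and> d \<le> 1" using wfG1 assms by auto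
  thus ?thesis using ax2[OF lgim_ax.trans1[where c=c and d=d and a=a and b=b and g=g]] assms by auto
qed

lemma not_TopBot: "G1 Top c Bot \<in> \<Gamma> \<Longrightarrow> c \<le> 0"
proof (rule ccontr)
  assume "G1 Top c Bot \<in> \<Gamma>" "\<not> c \<le> 0"
  hence "FNot (G1 Top c Bot) \<in> \<Gamma>" using wfG1 by (intro ax_in lgim_ax.inkons) auto
  thus False using notboth \<open>G1 Top c Bot \<in> \<Gamma>\<close> by blast
qed

definition V :: "bexp \<Rightarrow> real" where
  "V a = Sup {d. 0 \<le> d \<and> d \<le> 1 \<and> G1 Top d a \<in> \<Gamma>}"

lemma Vset: "0 \<in> {d. 0 \<le> d \<and> d \<le> 1 \<and> G1 Top d a \<in> \<Gamma>}" "bdd_above {d. 0 \<le> d \<and> d \<le> 1 \<and> G1 Top d a \<in> \<Gamma>}"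
  by (auto intro: ax_in lgim_ax.zero simp: bdd_above_def)

lemma Vne: "{d. 0 \<le> d \<and> d \<le> 1 \<and> G1 Top d a \<in> \<Gamma>} \<noteq> {}"
  using Vset(1)[of a] by (metis empty_iff)

lemma V1: "G1 Top d a \<in> \<Gamma> \<Longrightarrow> d \<le> V a"
  unfolding V_def using wfG1 Vset by (intro cSup_upper) auto

lemma V0: "0 \<le> V a" using V1[of 0 a] Vset by auto

lemma Vle1: "V a \<le> 1" unfolding V_def by (rule cSup_least) (use Vne[of a] in blast, auto)

lemma V2: assumes "0 \<le> d" "d < V a" shows "G1 Top d a \<in> \<Gamma>"
proof -
  have "\<exists>x\<in>{d. 0 \<le> d \<and> d \<le> 1 \<and> G1 Top d a \<in> \<Gamma>}. d < x"
    by (rule less_cSupD) (use Vne[of a] assms(2) in \<open>auto simp: V_def\<close>)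
  then obtain d' where "d' \<in> {d. 0 \<le> d \<and> d \<le> 1 \<and> G1 Top d a \<in> \<Gamma>}" "d < d'"
    by blast
  thus ?thesis using lower1 assms by auto
qed

lemma V2': "0 \<le> d \<Longrightarrow> d = 0 \<or> d < V a \<Longrightarrow> G1 Top d a \<in> \<Gamma>"
  using V2 ax_in[OF lgim_ax.zero[where a=Top and b=a]] by auto

lemma V4: assumes "G1 a p Bot \<in> \<Gamma>" shows "V a \<le> 1 - p"
  unfolding V_def
proof (rule cSup_least)
  show "{d. 0 \<le> d \<and> d \<le> 1 \<and> G1 Top d a \<in> \<Gamma>} \<noteq> {}" by (rule Vne)
  fix x assume "x \<in> {d. 0 \<le> d \<and> d \<le> 1 \<and> G1 Top d a \<in> \<Gamma>}"
  hence "G1 Top (luk_t x p) Bot \<in> \<Gamma>" using trans1 assms by auto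
  hence "luk_t x p \<le> 0" by (rule not_TopBot)
  thus "x \<le> 1 - p" by (simp add: luk_t_def)
qed

lemma V5: assumes "0 \<le> p" "p < 1 - V a" shows "G1 a p Bot \<in> \<Gamma>"
proof -
  have "FOr (G1 Top (1 - p) a) (G1 a (1 - (1 - p)) Bot) \<in> \<Gamma>"
    using assms V0[of a] by (intro ax_in lgim_ax.lin2) auto
  moreover have "G1 Top (1 - p) a \<notin> \<Gamma>" using V1[of "1-p" a] assms by auto
  ultimately show ?thesis using prime by auto
qed

lemma V5': "0 \<le> p \<Longrightarrow> p = 0 \<or> p < 1 - V a \<Longrightarrow> G1 a p Bot \<in> \<Gamma>"
  using V5 ax_in[OF lgim_ax.zero[where a=a and b=Bot]] by auto

end


lemma tn_cont_lim:
  assumes "cont_tnorm tn" "(xs \<longlongrightarrow> x0) sequentially" "(ys \<longlongrightarrow> y0) sequentially"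
    "\<And>n. xs n \<in> {0..1}" "\<And>n. ys n \<in> {0..1}" "x0 \<in> {0..1}" "y0 \<in> {0..1}"
  shows "((\<lambda>n. tn (xs n) (ys n)) \<longlongrightarrow> tn x0 y0) sequentially"
proof -
  have c: "continuous_on ({0..1} \<times> {0..1}) (\<lambda>(x, y). tn x y)" using assms(1) by (simp add: cont_tnorm_def)
  have "((\<lambda>n. (\<lambda>(x, y). tn x y) (xs n, ys n)) \<longlongrightarrow> (\<lambda>(x, y). tn x y) (x0, y0)) sequentially"
    by (rule continuous_on_tendsto_compose[OF c]) (use assms in \<open>auto intro: tendsto_Pair\<close>)
  thus ?thesis by simp
qed

lemma inv_seq: "((\<lambda>n. inverse (real (Suc n))) \<longlongrightarrow> 0) sequentially"
  using LIMSEQ_inverse_real_of_nat .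

lemma inv_seq_bounds: "0 < inverse (real (Suc n))" "inverse (real (Suc n)) \<le> 1"
  by (auto simp: field_simps)

lemma tn_lim_ge:
  assumes "cont_tnorm tn" "0 \<le> x0" "x0 \<le> 1" "0 \<le> y0" "y0 \<le> 1"
    and H: "\<And>x y. 0 \<le> x \<Longrightarrow> (x = 0 \<or> x < x0) \<Longrightarrow> 0 \<le> y \<Longrightarrow> (y = 0 \<or> y < y0) \<Longrightarrow> tn x y \<le> K"
  shows "tn x0 y0 \<le> K"
proof -
  define xs where "xs n = x0 * (1 - inverse (real (Suc n)))" for n
  define ys where "ys n = y0 * (1 - inverse (real (Suc n)))" for n
  have lx: "(xs \<longlongrightarrow> x0) sequentially" unfolding xs_def
    using tendsto_mult[OF tendsto_const tendsto_diff[OF tendsto_const inv_seq], of x0 1] by simp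
  have ly: "(ys \<longlongrightarrow> y0) sequentially" unfolding ys_def
    using tendsto_mult[OF tendsto_const tendsto_diff[OF tendsto_const inv_seq], of y0 1] by simp
  have bx: "0 \<le> xs n" "xs n \<le> x0" "xs n = 0 \<or> xs n < x0" for n
  proof -
    have i: "0 < inverse (real (Suc n))" "inverse (real (Suc n)) \<le> 1" by (rule inv_seq_bounds)+
    show "0 \<le> xs n" using i assms unfolding xs_def by simp
    show "xs n \<le> x0" using mult_left_le[of "1 - inverse (real (Suc n))" x0] i assms unfolding xs_def by simp
    show "xs n = 0 \<or> xs n < x0"
      using i assms unfolding xs_def by (cases "x0 = 0") (auto simp: mult_less_cancel_left1)
  qed
  have by': "0 \<le> ys n" "ys n \<le> y0" "ys n = 0 \<or> ys n < y0" for n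
  proof -
    have i: "0 < inverse (real (Suc n))" "inverse (real (Suc n)) \<le> 1" by (rule inv_seq_bounds)+
    show "0 \<le> ys n" using i assms unfolding ys_def by simp
    show "ys n \<le> y0" using mult_left_le[of "1 - inverse (real (Suc n))" y0] i assms unfolding ys_def by simp
    show "ys n = 0 \<or> ys n < y0"
      using i assms unfolding ys_def by (cases "y0 = 0") (auto simp: mult_less_cancel_left1)
  qed
  have "((\<lambda>n. tn (xs n) (ys n)) \<longlongrightarrow> tn x0 y0) sequentially"
  proof (intro tn_cont_lim[OF assms(1) lx ly])
    fix n
    show "xs n \<in> {0..1}" using bx(1,2)[of n] assms by auto
    show "ys n \<in> {0..1}" using by'(1,2)[of n] assms by auto
  qed (use assms in auto)
  moreover have "\<forall>n. tn (xs n) (ys n) \<le> K" using H bx by' by blast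
  ultimately show ?thesis by (intro LIMSEQ_le_const2) auto
qed

lemma tn_lim_le:
  assumes "cont_tnorm tn" "0 \<le> x0" "x0 \<le> 1" "0 \<le> y0" "y0 \<le> 1"
    and H: "\<And>x y. x \<le> 1 \<Longrightarrow> (x = 1 \<or> x0 < x) \<Longrightarrow> y \<le> 1 \<Longrightarrow> (y = 1 \<or> y0 < y) \<Longrightarrow> K \<le> tn x y"
  shows "K \<le> tn x0 y0"
proof -
  define xs where "xs n = x0 + (1 - x0) * inverse (real (Suc n))" for n
  define ys where "ys n = y0 + (1 - y0) * inverse (real (Suc n))" for n
  have lx: "(xs \<longlongrightarrow> x0) sequentially" unfolding xs_def
    using tendsto_add[OF tendsto_const tendsto_mult[OF tendsto_const inv_seq], of x0 "1-x0"] by simp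
  have ly: "(ys \<longlongrightarrow> y0) sequentially" unfolding ys_def
    using tendsto_add[OF tendsto_const tendsto_mult[OF tendsto_const inv_seq], of y0 "1-y0"] by simp
  have bx: "x0 \<le> xs n" "xs n \<le> 1" "xs n = 1 \<or> x0 < xs n" for n
  proof -
    have i: "0 < inverse (real (Suc n))" "inverse (real (Suc n)) \<le> 1" by (rule inv_seq_bounds)+
    have "(1 - x0) * inverse (real (Suc n)) \<le> 1 - x0" using i assms by (simp add: mult_left_le)
    thus "x0 \<le> xs n" "xs n \<le> 1" using i assms unfolding xs_def by auto
    show "xs n = 1 \<or> x0 < xs n"
      using i assms unfolding xs_def by (cases "x0 = 1") auto
  qed
  have by': "y0 \<le> ys n" "ys n \<le> 1" "ys n = 1 \<or> y0 < ys n" for n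
  proof -
    have i: "0 < inverse (real (Suc n))" "inverse (real (Suc n)) \<le> 1" by (rule inv_seq_bounds)+
    have "(1 - y0) * inverse (real (Suc n)) \<le> 1 - y0" using i assms by (simp add: mult_left_le)
    thus "y0 \<le> ys n" "ys n \<le> 1" using i assms unfolding ys_def by auto
    show "ys n = 1 \<or> y0 < ys n"
      using i assms unfolding ys_def by (cases "y0 = 1") auto
  qed
  have "((\<lambda>n. tn (xs n) (ys n)) \<longlongrightarrow> tn x0 y0) sequentially"
    using assms bx by' by (intro tn_cont_lim[OF assms(1) lx ly]) (auto intro: order_trans)
  moreover have "\<forall>n. K \<le> tn (xs n) (ys n)" using H bx by' by blast
  ultimately show ?thesis by (intro LIMSEQ_le_const) auto
qed


lemma ge_dense: fixes x y :: real
  assumes "\<And>d. 0 \<le> d \<Longrightarrow> d < x \<Longrightarrow> d \<le> y" "0 \<le> y" shows "x \<le> y"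
proof (rule dense_le)
  fix d assume "d < x" thus "d \<le> y" using assms by (cases "0 \<le> d") auto
qed

lemma luk_t_1[simp]: "0 \<le> d \<Longrightarrow> luk_t d 1 = d" "0 \<le> d \<Longrightarrow> luk_t 1 d = d"
  by (auto simp: luk_t_def)

context mc begin

lemma Vle_via: "(\<And>d. 0 \<le> d \<Longrightarrow> d \<le> 1 \<Longrightarrow> G1 Top d a \<in> \<Gamma> \<Longrightarrow> d \<le> x) \<Longrightarrow> V a \<le> x"
  unfolding V_def by (rule cSup_least) (use Vne[of a] in auto)

lemma TopNegBot: "G1 Top 1 (Neg Bot) \<in> \<Gamma>"
proof -
  have "G1 Bot 1 (Neg Top) \<in> \<Gamma>" by (rule ax_in) (rule lgim_ax.bot)
  hence "G1 (Neg (Neg Top)) 1 (Neg Bot) \<in> \<Gamma>" by (intro ax1[OF lgim_ax.neg1]) auto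
  moreover have "G1 Top 1 (Neg (Neg Top)) \<in> \<Gamma>" by (rule ax_in) (rule lgim_ax.neg3)
  ultimately show ?thesis using trans1 by fastforce
qed

lemma NegTopBot: "G1 (Neg Top) 1 Bot \<in> \<Gamma>"
proof -
  have "G1 (Neg Bot) 1 Top \<in> \<Gamma>" by (rule ax_in) (rule lgim_ax.top)
  hence "G1 (Neg Top) 1 (Neg (Neg Bot)) \<in> \<Gamma>" by (intro ax1[OF lgim_ax.neg1]) auto
  moreover have "G1 (Neg (Neg Bot)) 1 Bot \<in> \<Gamma>" by (rule ax_in) (rule lgim_ax.neg2)
  ultimately show ?thesis using trans1 by fastforce
qed

lemma V_Bot: "V Bot = 0"
proof -
  have "G1 Bot 1 Bot \<in> \<Gamma>" by (rule ax_in) (rule lgim_ax.bot)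
  hence "V Bot \<le> 0" using V4 by fastforce
  thus ?thesis using V0[of Bot] by simp
qed

lemma V_Top: "V Top = 1"
proof -
  have "G1 Top 1 Top \<in> \<Gamma>" by (rule ax_in) (rule lgim_ax.refl, auto)
  thus ?thesis using V1 Vle1[of Top] by fastforce
qed

lemma V_And: "V (And a b) = min (V a) (V b)"
proof (rule antisym)
  have "V (And a b) \<le> V a"
  proof (rule Vle_via)
    fix d assume d: "0 \<le> d" "G1 Top d (And a b) \<in> \<Gamma>"
    have "G1 (And a b) 1 a \<in> \<Gamma>" by (rule ax_in) (rule lgim_ax.and2)
    hence "G1 Top (luk_t d 1) a \<in> \<Gamma>" using trans1 d by blast
    thus "d \<le> V a" using V1 d by simp
  qed
  moreover have "V (And a b) \<le> V b"
  proof (rule Vle_via)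
    fix d assume d: "0 \<le> d" "G1 Top d (And a b) \<in> \<Gamma>"
    have "G1 (And a b) 1 b \<in> \<Gamma>" by (rule ax_in) (rule lgim_ax.and3)
    hence "G1 Top (luk_t d 1) b \<in> \<Gamma>" using trans1 d by blast
    thus "d \<le> V b" using V1 d by simp
  qed
  ultimately show "V (And a b) \<le> min (V a) (V b)" by simp
  show "min (V a) (V b) \<le> V (And a b)"
  proof (rule ge_dense)
    fix d assume d: "0 \<le> d" "d < min (V a) (V b)"
    hence "G1 Top d a \<in> \<Gamma>" "G1 Top d b \<in> \<Gamma>" using V2 by auto
    moreover have "d \<le> 1" using d Vle1[of a] by auto
    ultimately have "G1 Top d (And a b) \<in> \<Gamma>" using d by (intro ax2[OF lgim_ax.and1]) auto
    thus "d \<le> V (And a b)" by (rule V1)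
  qed (rule V0)
qed

lemma V_Or: "V (Or a b) = max (V a) (V b)"
proof (rule antisym)
  have "V a \<le> V (Or a b)"
  proof (rule Vle_via)
    fix d assume d: "0 \<le> d" "G1 Top d a \<in> \<Gamma>"
    have "G1 a 1 (Or a b) \<in> \<Gamma>" by (rule ax_in) (rule lgim_ax.or2)
    hence "G1 Top (luk_t d 1) (Or a b) \<in> \<Gamma>" using trans1 d by blast
    thus "d \<le> V (Or a b)" using V1 d by simp
  qed
  moreover have "V b \<le> V (Or a b)"
  proof (rule Vle_via)
    fix d assume d: "0 \<le> d" "G1 Top d b \<in> \<Gamma>"
    have "G1 b 1 (Or a b) \<in> \<Gamma>" by (rule ax_in) (rule lgim_ax.or3)
    hence "G1 Top (luk_t d 1) (Or a b) \<in> \<Gamma>" using trans1 d by blast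
    thus "d \<le> V (Or a b)" using V1 d by simp
  qed
  ultimately show "max (V a) (V b) \<le> V (Or a b)" by simp
  have "1 - max (V a) (V b) \<le> 1 - V (Or a b)"
  proof (rule ge_dense)
    fix p assume p: "0 \<le> p" "p < 1 - max (V a) (V b)"
    hence "G1 a p Bot \<in> \<Gamma>" "G1 b p Bot \<in> \<Gamma>" using V5 by auto
    moreover have "p \<le> 1" using p V0[of a] by auto
    ultimately have "G1 (Or a b) p Bot \<in> \<Gamma>" using p by (intro ax2[OF lgim_ax.or1]) auto
    thus "p \<le> 1 - V (Or a b)" using V4 by fastforce
  qed (use Vle1 in auto)
  thus "V (Or a b) \<le> max (V a) (V b)" by simp
qed

lemma V_Neg: "V (Neg a) = 1 - V a"
proof (rule antisym)
  show "V (Neg a) \<le> 1 - V a"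
  proof (rule Vle_via)
    fix d assume d: "0 \<le> d" "d \<le> 1" "G1 Top d (Neg a) \<in> \<Gamma>"
    have "G1 (Neg (Neg a)) d (Neg Top) \<in> \<Gamma>" using d by (intro ax1[OF lgim_ax.neg1]) auto
    moreover have "G1 a 1 (Neg (Neg a)) \<in> \<Gamma>" by (rule ax_in) (rule lgim_ax.neg3)
    ultimately have "G1 a (luk_t 1 d) (Neg Top) \<in> \<Gamma>" using trans1 by blast
    hence "G1 a (luk_t (luk_t 1 d) 1) Bot \<in> \<Gamma>" using trans1 NegTopBot by blast
    hence "G1 a d Bot \<in> \<Gamma>" using d by simp
    thus "d \<le> 1 - V a" using V4 by fastforce
  qed
  show "1 - V a \<le> V (Neg a)"
  proof (rule ge_dense)
    fix d assume d: "0 \<le> d" "d < 1 - V a"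
    hence "G1 a d Bot \<in> \<Gamma>" using V5 by auto
    moreover have "d \<le> 1" using d V0[of a] by auto
    ultimately have "G1 (Neg Bot) d (Neg a) \<in> \<Gamma>" using d by (intro ax1[OF lgim_ax.neg1]) auto
    hence "G1 Top (luk_t 1 d) (Neg a) \<in> \<Gamma>" using trans1 TopNegBot by blast
    thus "d \<le> V (Neg a)" using V1 d by simp
  qed (rule V0)
qed

lemma V_Odot: "V (Odot a b) = tn (V a) (V b)"
proof (rule antisym)
  show "tn (V a) (V b) \<le> V (Odot a b)"
  proof (rule tn_lim_ge[OF tnorm V0 Vle1 V0 Vle1])
    fix x y assume xy: "0 \<le> x" "x = 0 \<or> x < V a" "0 \<le> y" "y = 0 \<or> y < V b"
    have "G1 Top x a \<in> \<Gamma>" "G1 Top y b \<in> \<Gamma>" using xy V2' by auto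
    moreover have "x \<le> 1" "y \<le> 1" using xy Vle1[of a] Vle1[of b] by auto
    ultimately have "G1 Top (tn x y) (Odot a b) \<in> \<Gamma>" using xy by (intro ax2[OF lgim_ax.odot1]) auto
    thus "tn x y \<le> V (Odot a b)" by (rule V1)
  qed
  show "V (Odot a b) \<le> tn (V a) (V b)"
  proof (rule tn_lim_le[OF tnorm V0 Vle1 V0 Vle1])
    fix x y assume xy: "x \<le> 1" "x = 1 \<or> V a < x" "y \<le> 1" "y = 1 \<or> V b < y"
    have "G1 a (1 - x) Bot \<in> \<Gamma>" "G1 b (1 - y) Bot \<in> \<Gamma>" using xy by (auto intro!: V5')
    moreover have "0 \<le> x" "0 \<le> y" using xy V0[of a] V0[of b] by auto
    ultimately have "G1 (Odot a b) (tconorm tn (1 - x) (1 - y)) Bot \<in> \<Gamma>" using xy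
      by (intro ax2[OF lgim_ax.odot2]) auto
    hence "V (Odot a b) \<le> 1 - tconorm tn (1 - x) (1 - y)" by (rule V4)
    thus "V (Odot a b) \<le> tn x y" by (simp add: tconorm_def)
  qed
qed

lemma beval_V: "beval tn (\<lambda>i. V (Var i)) a = V a"
  by (induction a) (simp_all add: V_Bot V_Top V_And V_Or V_Neg V_Odot)

end


lemma avg_img: "avg_mset (image_mset f (mset xs)) = sum_list (map f xs) / real (length xs)"
proof -
  have "image_mset f (mset xs) = mset (map f xs)" by simp
  thus ?thesis by (simp only: avg_mset_def sum_mset_sum_list size_mset length_map)
qed

lemma sum_list_eps: fixes f g :: "'a \<Rightarrow> real"
  assumes "\<And>x. x \<in> set xs \<Longrightarrow> f x - e \<le> g x"
  shows "sum_list (map f xs) - real (length xs) * e \<le> sum_list (map g xs)"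
proof -
  have "sum_list (map (\<lambda>x. f x - e) xs) \<le> sum_list (map g xs)"
    using assms by (intro sum_list_mono) auto
  moreover have "sum_list (map (\<lambda>x. f x - e) xs) = sum_list (map f xs) - real (length xs) * e"
    by (simp add: sum_list_subtractf sum_list_triv)
  ultimately show ?thesis by simp
qed

lemma lin_aux: fixes A x q e t vg :: real
  shows "1 - A - (e-t)/2 \<le> x \<Longrightarrow> vg - (e-t)/2 \<le> q \<Longrightarrow> A \<le> vg + 1 - e \<Longrightarrow> t \<le> x + q"
  by (simp add: field_simps)

context mc begin

lemma G_sound:
  assumes "GImp (mset ns) c b \<in> \<Gamma>"
  shows "sum_list (map V ns) / real (length ns) \<le> V b + 1 - c"
proof -
  have w: "ns \<noteq> []" "0 \<le> c" "c \<le> 1" using wfG assms by auto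
  define n where "n = length ns"
  have n1: "1 \<le> n" using w n_def by (cases ns) auto
  show ?thesis
  proof (rule field_le_epsilon)
    fix \<epsilon> :: real assume \<epsilon>: "0 < \<epsilon>"
    define ds where "ds x = max 0 (V x - \<epsilon>)" for x
    define cs where "cs = map ds ns"
    have dsb: "0 \<le> ds x" "ds x \<le> 1" for x using Vle1[of x] \<epsilon> by (auto simp: ds_def)
    have dsin: "G1 Top (ds x) x \<in> \<Gamma>" for x
      using \<epsilon> by (intro V2') (auto simp: ds_def max_def)
    have i1: "Imp (Conjs (map (\<lambda>(a, c, b). G1 a c b) (zip (replicate n Top) (zip cs ns)))
                          (GImp (mset ns) c b))
                    (GImp (mset (replicate n Top)) (luk_t (avg_list cs) c) b) \<in> \<Gamma>"
    proof (rule ax_in, rule lgim_ax.transM1)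
      show "\<forall>c\<in>set cs. 0 \<le> c \<and> c \<le> 1" using dsb by (auto simp: cs_def)
    qed (use n1 w in \<open>auto simp: cs_def n_def\<close>)
    have i2: "Conjs (map (\<lambda>(a, c, b). G1 a c b) (zip (replicate n Top) (zip cs ns)))
                          (GImp (mset ns) c b) \<in> \<Gamma>"
    proof -
      have "map (\<lambda>(a, c, b). G1 a c b) (zip (replicate n Top) (zip cs ns)) = map (\<lambda>x. G1 Top (ds x) x) ns"
        by (simp add: cs_def n_def zip_replicate1 zip_map1 zip_same_conv_map)
      thus ?thesis using assms dsin by (intro Conjs_in) auto
    qed
    have "GImp (replicate_mset n Top) (luk_t (avg_list cs) c) b \<in> \<Gamma>"
      using mpG[OF i2 i1] by simp
    moreover have "0 \<le> luk_t (avg_list cs) c" "luk_t (avg_list cs) c \<le> 1"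
      using avg_list_bounds[of cs] dsb w by (auto simp: luk_t_def cs_def)
    ultimately have "G1 Top (luk_t (avg_list cs) c) b \<in> \<Gamma>"
      using n1 by (intro ax1[OF lgim_ax.topM]) auto
    hence "luk_t (avg_list cs) c \<le> V b" by (rule V1)
    hence L: "avg_list cs + c - 1 \<le> V b" by (simp add: luk_t_def)
    have "sum_list (map V ns) - real n * \<epsilon> \<le> sum_list cs"
      unfolding cs_def n_def by (rule sum_list_eps) (auto simp: ds_def)
    hence "sum_list (map V ns) / real n \<le> (sum_list cs + real n * \<epsilon>) / real n"
      by (intro divide_right_mono) auto
    also have "\<dots> = avg_list cs + \<epsilon>"
      using n1 w by (simp add: avg_list_def cs_def n_def add_divide_distrib)
    finally have "sum_list (map V ns) / real n - \<epsilon> \<le> avg_list cs" by simp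
    thus "sum_list (map V ns) / real (length ns) \<le> V b + 1 - c + \<epsilon>"
      using L n_def by simp
  qed
qed

lemma G_complete:
  assumes "sum_list (map V ms) / real (length ms) \<le> V g + 1 - e"
    "0 \<le> t" "t < e" "e \<le> 1" "ms \<noteq> []"
  shows "GImp (mset ms) t g \<in> \<Gamma>"
proof -
  define \<epsilon> where "\<epsilon> = (e - t) / 2"
  have \<epsilon>: "0 < \<epsilon>" using assms by (simp add: \<epsilon>_def)
  define ps where "ps x = max 0 (1 - V x - \<epsilon>)" for x
  define q where "q = max 0 (V g - \<epsilon>)"
  define cs where "cs = map ps ms"
  have psb: "0 \<le> ps x" "ps x \<le> 1" for x using V0[of x] \<epsilon> by (auto simp: ps_def)
  have qb: "0 \<le> q" "q \<le> 1" using Vle1[of g] \<epsilon> by (auto simp: q_def)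
  have psin: "G1 x (ps x) Bot \<in> \<Gamma>" for x
    using \<epsilon> by (intro V5') (auto simp: ps_def max_def)
  have qin: "G1 Top q g \<in> \<Gamma>"
    using \<epsilon> by (intro V2') (auto simp: q_def max_def)
  have l1: "1 \<le> length ms" using assms by (cases ms) auto
  have i1: "Imp (Conjs (map (\<lambda>(a, c). G1 a c Bot) (zip ms cs)) (G1 Top q g))
                    (GImp (mset ms) (luk_s (avg_list cs) q) g) \<in> \<Gamma>"
  proof (rule ax_in, rule lgim_ax.transM3)
    show "\<forall>c\<in>set cs. 0 \<le> c \<and> c \<le> 1" using psb by (auto simp: cs_def)
  qed (use l1 qb in \<open>auto simp: cs_def\<close>)
  have i2: "Conjs (map (\<lambda>(a, c). G1 a c Bot) (zip ms cs)) (G1 Top q g) \<in> \<Gamma>"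
  proof -
    have "map (\<lambda>(a, c). G1 a c Bot) (zip ms cs) = map (\<lambda>x. G1 x (ps x) Bot) ms"
      by (simp add: cs_def zip_map2 zip_same_conv_map)
    thus ?thesis using qin psin by (intro Conjs_in) auto
  qed
  have I: "GImp (mset ms) (luk_s (avg_list cs) q) g \<in> \<Gamma>" using mpG[OF i2 i1] .
  have "sum_list (map (\<lambda>x. 1 - V x) ms) - real (length ms) * \<epsilon> \<le> sum_list cs"
    unfolding cs_def by (rule sum_list_eps) (auto simp: ps_def)
  moreover have "sum_list (map (\<lambda>x. 1 - V x) ms) = real (length ms) - sum_list (map V ms)"
    by (simp add: sum_list_subtractf sum_list_triv)
  ultimately have "real (length ms) - sum_list (map V ms) \<le> sum_list cs + real (length ms) * \<epsilon>" by simp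
  hence "(real (length ms) - sum_list (map V ms)) / real (length ms) \<le> (sum_list cs + real (length ms) * \<epsilon>) / real (length ms)"
    by (intro divide_right_mono) auto
  also have "\<dots> = avg_list cs + \<epsilon>"
    using l1 assms(5) by (simp add: avg_list_def cs_def add_divide_distrib)
  finally have "(real (length ms) - sum_list (map V ms)) / real (length ms) \<le> avg_list cs + \<epsilon>" .
  moreover have "(real (length ms) - sum_list (map V ms)) / real (length ms) = 1 - sum_list (map V ms) / real (length ms)"
    using l1 assms(5) by (simp add: diff_divide_distrib)
  ultimately have "1 - sum_list (map V ms) / real (length ms) - \<epsilon> \<le> avg_list cs" by simp
  moreover have "V g - \<epsilon> \<le> q" by (simp add: q_def)
  ultimately have "t \<le> avg_list cs + q" using assms(1) lin_aux[where A="sum_list (map V ms) / real (length ms)" and t=t and e=e and x="avg_list cs" and vg="V g" and q=q] \<epsilon>_def by blast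
  hence "t \<le> luk_s (avg_list cs) q" using assms by (simp add: luk_s_def)
  thus ?thesis using lower[OF I assms(2)] by blast
qed

end


theorem mainTheorem9:
  fixes tn :: "real \<Rightarrow> real \<Rightarrow> real" and T :: "fm set"
    and M :: "bexp multiset" and e t :: real and \<eta> :: bexp
  assumes "cont_tnorm tn"
    and "\<forall>A\<in>T. wf_fm A \<and> (\<exists>N c b. A = GImp N c b)"
    and "M \<noteq> {#}" and "0 \<le> e" and "e \<le> 1"
    and "entails tn T (GImp M e \<eta>)"
    and "0 \<le> t" and "t < e"
  shows "derivable tn T (GImp M t \<eta>)"
proof (rule ccontr)
  define goal where "goal = GImp M t \<eta>"
  assume nT: "\<not> derivable tn T (GImp M t \<eta>)"
  define \<A> where "\<A> = {S. T \<subseteq> S \<and> (\<forall>X\<in>S. wf_fm X) \<and> \<not> derivable tn S goal}"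
  have TA: "T \<in> \<A>" using nT assms(2) by (auto simp: \<A>_def goal_def)
  have "\<exists>G\<in>\<A>. \<forall>X\<in>\<A>. G \<subseteq> X \<longrightarrow> X = G"
  proof (rule subset_Zorn_nonempty)
    show "\<A> \<noteq> {}" using TA by blast
  next
    fix \<C> assume C: "\<C> \<noteq> {}" "subset.chain \<A> \<C>"
    have sub: "\<C> \<subseteq> \<A>" using C(2) by (auto simp: subset.chain_def)
    have "T \<subseteq> \<Union>\<C>" using C sub by (auto simp: \<A>_def)
    moreover have "\<forall>X\<in>\<Union>\<C>. wf_fm X" using sub by (auto simp: \<A>_def)
    moreover have "\<not> derivable tn (\<Union>\<C>) goal"
    proof
      assume "derivable tn (\<Union>\<C>) goal"
      then obtain S0 where S0: "finite S0" "S0 \<subseteq> \<Union>\<C>" "derivable tn S0 goal"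
        using der_compact by blast
      obtain B where "B \<in> \<C>" "S0 \<subseteq> B" using finite_subset_Union_chain[OF S0(1) S0(2) C(1) C(2)] by blast
      hence "derivable tn B goal" using der_mono S0(3) by blast
      moreover have "\<not> derivable tn B goal" using \<open>B \<in> \<C>\<close> sub by (auto simp: \<A>_def)
      ultimately show False by blast
    qed
    ultimately show "\<Union>\<C> \<in> \<A>" by (simp add: \<A>_def)
  qed
  then obtain G where G: "G \<in> \<A>" "\<forall>X\<in>\<A>. G \<subseteq> X \<longrightarrow> X = G" by blast
  interpret mc tn G goal
  proof
    show "cont_tnorm tn" by (rule assms(1))
    show "\<forall>X\<in>G. wf_fm X" using G by (auto simp: \<A>_def)
    show "wf_fm goal" using assms by (auto simp: goal_def)
    show "\<not> derivable tn G goal" using G by (auto simp: \<A>_def)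
    fix S assume "G \<subseteq> S" "\<forall>X\<in>S. wf_fm X" "\<not> derivable tn S goal"
    moreover have "T \<subseteq> S" using G(1) \<open>G \<subseteq> S\<close> by (auto simp: \<A>_def)
    ultimately show "S = G" using G(2) by (auto simp: \<A>_def)
  qed
  define w where "w i = V (Var i)" for i
  have bw: "beval tn w a = V a" for a unfolding w_def by (rule beval_V)
  have bwf: "beval tn w = V" using bw by (rule ext)
  have val: "valuation w" using V0 Vle1 by (auto simp: valuation_def w_def)
  have satT: "\<forall>B\<in>T. sat tn w B"
  proof
    fix B assume B: "B \<in> T"
    then obtain N c b where Bd: "B = GImp N c b" using assms(2) by blast
    obtain ns where ns: "mset ns = N" using ex_mset by blast
    have "B \<in> G" using G(1) B by (auto simp: \<A>_def)
    hence "GImp (mset ns) c b \<in> G" using Bd ns by simp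
    hence "sum_list (map V ns) / real (length ns) \<le> V b + 1 - c"
      by (rule G_sound)
    thus "sat tn w B" using Bd ns[symmetric] by (simp add: bwf bw avg_img)
  qed
  obtain ms where ms: "mset ms = M" using ex_mset by blast
  have "sat tn w (GImp M e \<eta>)" using assms(6) val satT by (auto simp: entails_def)
  hence "sat tn w (GImp (mset ms) e \<eta>)" using ms by simp
  hence "sum_list (map V ms) / real (length ms) \<le> V \<eta> + 1 - e"
    by (simp add: bwf bw avg_img)
  moreover have "ms \<noteq> []" using ms assms(3) by auto
  ultimately have "GImp (mset ms) t \<eta> \<in> G"
    using assms(5,7,8) by (intro G_complete) auto
  thus False using goal_notin ms by (simp add: goal_def)
qed

end
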